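(* Let $N$ be the set of the 24 neutral triads $\{x,x+7,x+14\}\subset\mathbb{Z}_{24}$, $x\in\mathbb{Z}_{24}$. The map $L:N\to N$, $L\langle x,x+7,x+14\rangle=I_{2x+21}\langle x,x+7,x+14\rangle$ (where $I_n(y)=-y+n$ mod 24 componentwise), generates a cyclic group of permutations of $N$ isomorphic to $\mathbb{Z}_{24}$.
   Context: A neutral triad with root $x$ is written $\langle x,x+7,x+14\rangle$; in general the Leading Tone Exchange function is $L\langle y_1,y_2,y_3\rangle=I_{y_2+y_3}\langle y_1,y_2,y_3\rangle$, which on neutral triads gives the formula above. Triads are compared as unordered subsets of $\mathbb{Z}_{24}$. *)

theory Defs
  imports "HOL-Algebra.Bij" "HOL-Algebra.Elementary_Groups"
begin

text \<open>Z_24 is represented by the integers 0..23; arithmetic is taken mod 24.\<close>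

definition neutral_triad :: "int \<Rightarrow> int set" where
  "neutral_triad x = {x mod 24, (x + 7) mod 24, (x + 14) mod 24}"

definition neutral_triads :: "int set set" where
  "neutral_triads = neutral_triad ` {0..<24}"

definition inv24 :: "int \<Rightarrow> int \<Rightarrow> int" where
  "inv24 n y = (- y + n) mod 24"

definition triad_root :: "int set \<Rightarrow> int" where
  "triad_root T = (THE x. x \<in> {0..<24} \<and> T = neutral_triad x)"

definition LT :: "int set \<Rightarrow> int set" where
  "LT T = inv24 (2 * triad_root T + 21) ` T"

end

theory Submission
  imports Defs
begin

lemma nt_inj0:
  fixes a b :: int
  assumes "0 \<le> a" "a < 24" "0 \<le> b" "b < 24"
    and m: "a \<in> {b, (b+7) mod 24, (b+14) mod 24}" "(a+7) mod 24 \<in> {b, (b+7) mod 24, (b+14) mod 24}"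
       "(a+14) mod 24 \<in> {b, (b+7) mod 24, (b+14) mod 24}"
  shows "a = b"
proof -
  have "b \<in> set [0..23]" using assms(3,4) by auto
  then have "b \<in> {0,1,2,3,4,5,6,7,8,9,10,11,12,13,14,15,16,17,18,19,20,21,22,23}" by (simp add: upto.simps)
  then show ?thesis using m by auto
qed

lemma nt_alt: "neutral_triad x = {x mod 24, (x mod 24 + 7) mod 24, (x mod 24 + 14) mod 24}"
  unfolding neutral_triad_def by (simp add: mod_add_left_eq)

lemma nt_inj: assumes "neutral_triad x = neutral_triad y" shows "x mod 24 = y mod 24"
proof (rule nt_inj0)
  have e: "{x mod 24, (x mod 24 + 7) mod 24, (x mod 24 + 14) mod 24}
     = {y mod 24, (y mod 24 + 7) mod 24, (y mod 24 + 14) mod 24}"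
    using assms unfolding nt_alt .
  show "x mod 24 \<in> {y mod 24, (y mod 24 + 7) mod 24, (y mod 24 + 14) mod 24}"
       "(x mod 24 + 7) mod 24 \<in> {y mod 24, (y mod 24 + 7) mod 24, (y mod 24 + 14) mod 24}"
       "(x mod 24 + 14) mod 24 \<in> {y mod 24, (y mod 24 + 7) mod 24, (y mod 24 + 14) mod 24}"
    by (simp_all only: e[symmetric] insertI1 insertI2)
qed auto


lemma modx: "(- ((x + c) mod 24) + (2 * (x mod 24) + 21)) mod 24 = (x + 21 - c) mod 24" for x c :: int
proof -
  have "- ((x + c) mod 24) + (2 * (x mod 24) + 21) = (x + 21 - c) + 24 * ((x+c) div 24 - 2*(x div 24))"
    by (simp add: minus_mult_div_eq_mod[symmetric] algebra_simps)
  then show ?thesis by (metis mod_mult_self2)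
qed

abbreviation NN where "NN \<equiv> neutral_triads"

lemma nt_mod: "neutral_triad (x mod 24) = neutral_triad x"
  unfolding neutral_triad_def by (simp add: mod_add_left_eq)

lemma nt_eq_iff: "neutral_triad x = neutral_triad y \<longleftrightarrow> x mod 24 = y mod 24"
  by (metis nt_inj nt_mod)

lemma root_nt: "triad_root (neutral_triad x) = x mod 24"
  unfolding triad_root_def
  by (rule the_equality) (auto simp: nt_eq_iff)

lemma NN_alt: "NN = range neutral_triad"
proof -
  have "neutral_triad x \<in> neutral_triad ` {0..<24}" for x
    by (metis nt_mod atLeastLessThan_iff image_eqI pos_mod_bound pos_mod_sign zero_less_numeral)
  then show ?thesis unfolding neutral_triads_def by auto
qed

lemma LT_nt: "LT (neutral_triad x) = neutral_triad (x + 7)"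
proof -
  have "LT (neutral_triad x) = inv24 (2*(x mod 24)+21) ` {x mod 24, (x+7) mod 24, (x+14) mod 24}"
    by (simp only: LT_def root_nt) (simp add: neutral_triad_def)
  also have "\<dots> = {(x+21) mod 24, (x+14) mod 24, (x+7) mod 24}"
    using modx[of x 0] modx[of x 7] modx[of x 14] by (simp add: inv24_def add.commute)
  also have "\<dots> = neutral_triad (x+7)" unfolding neutral_triad_def
    by (auto simp: add.assoc)
  finally show ?thesis .
qed

definition sh :: "int \<Rightarrow> int set \<Rightarrow> int set" where
  "sh k = (\<lambda>T\<in>NN. neutral_triad (triad_root T + 7 * k))"

lemma nt_in: "neutral_triad x \<in> NN" by (simp add: NN_alt)

lemma sh_nt: "sh k (neutral_triad x) = neutral_triad (x + 7 * k)"
  unfolding sh_def using nt_in[of x] by (simp add: root_nt nt_eq_iff mod_add_left_eq)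

lemma NN_cases: assumes "T \<in> NN" obtains x where "T = neutral_triad x"
  using assms NN_alt by auto

lemma sh_eqI: assumes "\<And>x. f (neutral_triad x) = g (neutral_triad x)"
  "f \<in> extensional NN" "g \<in> extensional NN" shows "f = g"
proof (rule extensionalityI[OF assms(2,3)])
  fix T assume "T \<in> NN" then show "f T = g T" using assms(1) by (auto elim: NN_cases)
qed

lemma sh_ext: "sh k \<in> extensional NN" unfolding sh_def by simp

lemma sh_comp: "compose NN (sh a) (sh b) = sh (a + b)"
  by (rule sh_eqI) (simp_all add: compose_def sh_nt nt_in sh_ext algebra_simps)

lemma sh_0: "sh 0 = (\<lambda>T\<in>NN. T)"
  by (rule sh_eqI) (simp_all add: sh_nt nt_in sh_ext)

lemma sh_mod: "sh (k mod 24) = sh k"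
  by (rule sh_eqI) (simp_all add: sh_nt sh_ext nt_eq_iff, metis mod_add_right_eq mod_mult_right_eq)

lemma sh_maps: "sh k \<in> NN \<rightarrow> NN"
  by (auto elim!: NN_cases simp: sh_nt nt_in)

lemma sh_Bij: "sh k \<in> Bij NN"
proof -
  have "bij_betw (sh k) NN NN"
  proof (rule bij_betw_byWitness[where f'="sh (-k)"])
    show "\<forall>a\<in>NN. sh (- k) (sh k a) = a" by (auto elim!: NN_cases simp: sh_nt)
    show "\<forall>a\<in>NN. sh k (sh (- k) a) = a" by (auto elim!: NN_cases simp: sh_nt)
    show "sh k ` NN \<subseteq> NN" "sh (-k) ` NN \<subseteq> NN" using sh_maps by blast+
  qed
  then show ?thesis unfolding Bij_def using sh_ext by simp
qed

lemma sh_inj: assumes "sh a = sh b" shows "a mod 24 = b mod 24"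
proof -
  have "neutral_triad (0 + 7 * a) = neutral_triad (0 + 7 * b)"
    using assms sh_nt by metis
  then have h: "(7 * a) mod 24 = (7 * b) mod 24" by (simp add: nt_eq_iff)
  have "(7 * (7 * a)) mod 24 = (7 * (7 * b)) mod 24" by (metis h mod_mult_right_eq)
  moreover have "(7 * (7 * c)) mod 24 = c mod 24" for c :: int
  proof -
    have "7 * (7 * c) = c + 24 * (2 * c)" by simp
    then show ?thesis by (metis mod_mult_self2)
  qed
  ultimately show ?thesis by simp
qed

lemma LT_sh: "restrict LT NN = sh 1"
  by (rule sh_eqI) (simp_all add: sh_nt nt_in sh_ext LT_nt)

abbreviation GG where "GG \<equiv> BijGroup NN"

lemma GG_mult: "sh a \<otimes>\<^bsub>GG\<^esub> sh b = sh (a + b)"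
  by (simp add: BijGroup_def sh_Bij sh_comp)

lemma GG_one: "\<one>\<^bsub>GG\<^esub> = sh 0"
  by (simp add: BijGroup_def sh_0)

lemma GG_pow: "sh 1 [^]\<^bsub>GG\<^esub> (n::nat) = sh (int n)"
  by (induction n) (simp_all add: GG_one GG_mult add.commute)


abbreviation KK where "KK \<equiv> sh ` {0..<24}"

lemma sh_KK: "sh k \<in> KK"
proof -
  have "k mod 24 \<in> {0..<24}" by simp
  then show ?thesis using sh_mod[of k] by (metis image_eqI)
qed

lemma carrier_GG: "carrier GG = Bij NN" by (simp add: BijGroup_def)

lemma KK_sub: "subgroup KK GG"
proof (rule subgroup.intro)
  show "KK \<subseteq> carrier GG" using sh_Bij carrier_GG by auto
  show "x \<otimes>\<^bsub>GG\<^esub> y \<in> KK" if "x \<in> KK" "y \<in> KK" for x y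
    using that by (auto simp: GG_mult sh_KK)
  show "\<one>\<^bsub>GG\<^esub> \<in> KK" by (simp add: GG_one sh_KK)
  show "inv\<^bsub>GG\<^esub> x \<in> KK" if "x \<in> KK" for x
  proof -
    obtain a where a: "x = sh a" using \<open>x \<in> KK\<close> by auto
    have "inv\<^bsub>GG\<^esub> (sh a) = sh (- a)"
      by (rule group.inv_equality[OF group_BijGroup]) (simp_all add: GG_mult GG_one carrier_GG sh_Bij)
    then show ?thesis using a sh_KK by simp
  qed
qed

theorem mainTheorem6:
  shows "restrict LT neutral_triads \<in> carrier (BijGroup neutral_triads) \<and>
         subgroup_generated (BijGroup neutral_triads) {restrict LT neutral_triads}
           \<cong> integer_mod_group 24"
proof -
  let ?H = "subgroup_generated GG {sh 1}"
  have f: "sh 1 \<in> carrier GG" by (simp add: carrier_GG sh_Bij)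
  have cH: "carrier ?H = generate GG {sh 1}"
    using f by (simp add: carrier_subgroup_generated Int_absorb1)
  have s1: "generate GG {sh 1} \<subseteq> KK"
    by (rule group.generate_subgroup_incl[OF group_BijGroup]) (auto simp: KK_sub sh_KK)
  have s2: "KK \<subseteq> generate GG {sh 1}"
  proof
    fix y assume "y \<in> KK"
    then obtain k where k: "k \<in> {0..<24}" "y = sh k" by auto
    have "sh 1 [^]\<^bsub>GG\<^esub> (int (nat k)) = sh (int (nat k))"
      unfolding int_pow_int by (rule GG_pow)
    moreover have "int (nat k) = k" using k by simp
    ultimately have "sh k = sh 1 [^]\<^bsub>GG\<^esub> (int (nat k))" by simp
    then show "y \<in> generate GG {sh 1}"
      using k group.generate_pow[OF group_BijGroup f] by auto
  qed
  have cH2: "carrier ?H = KK" using cH s1 s2 by auto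
  have mH: "mult ?H = mult GG" by (simp add: subgroup_generated_def)
  have "sh \<in> iso (integer_mod_group 24) ?H"
    unfolding iso_def hom_def
  proof (intro CollectI conjI)
    show "sh \<in> carrier (integer_mod_group 24) \<rightarrow> carrier ?H"
      by (simp add: carrier_integer_mod_group cH2)
    show "\<forall>x\<in>carrier (integer_mod_group 24). \<forall>y\<in>carrier (integer_mod_group 24).
          sh (x \<otimes>\<^bsub>integer_mod_group 24\<^esub> y) = sh x \<otimes>\<^bsub>?H\<^esub> sh y"
      by (simp add: mH GG_mult sh_mod)
    show "bij_betw sh (carrier (integer_mod_group 24)) (carrier ?H)"
      unfolding bij_betw_def cH2 carrier_integer_mod_group
    proof
      show "inj_on sh (if 24 = (0::nat) then UNIV else {0..<int 24})"
      proof (rule inj_onI)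
        fix a b assume a: "a \<in> (if 24 = (0::nat) then UNIV else {0..<int 24})"
          and b: "b \<in> (if 24 = (0::nat) then UNIV else {0..<int 24})" and e: "sh a = sh b"
        have "a mod 24 = b mod 24" using sh_inj[OF e] .
        moreover have "a mod 24 = a" using a by simp
        moreover have "b mod 24 = b" using b by simp
        ultimately show "a = b" by simp
      qed
    qed simp
  qed
  then have "integer_mod_group 24 \<cong> ?H" by (rule is_isoI)
  then have "?H \<cong> integer_mod_group 24" by (rule group.iso_sym[OF group_integer_mod_group])
  then show ?thesis using f by (simp add: LT_sh)
qed

end
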